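(* Let $\mu$ be a symmetric measure on $L_n$ with $C^0_\mu<3$, and write $a_j=\mu(j)$. Then $a_i<a_j<\frac{j}{i}a_i$ for all $1\le i<j\le\lceil n/2\rceil$.
   Context: $L_n$ is the path graph with vertices $\{1,\dots,n\}$ and edges $\{j,j+1\}$, with distance $|i-j|$. A measure on $L_n$ is a weight function $\mu:\{1,\dots,n\}\to(0,\infty)$, $\mu(A)=\sum_{v\in A}\mu(v)$; it is symmetric if $\mu(j)=\mu(n+1-j)$ for all $j$. $B(x,r)=\{y:|x-y|\le r\}$ and $C^0_\mu=\max_{1\le x\le n}\mu(B(x,1))/\mu(x)$. *)

theory Defs
  imports Complex_Main
begin

text \<open>Path graph L_n on vertices {1..n}, distance |i-j|. A measure is a weight
function mu on {1..n} with positive values (values outside {1..n} are irrelevant).\<close>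

definition is_measure_Ln :: "nat \<Rightarrow> (nat \<Rightarrow> real) \<Rightarrow> bool" where
  "is_measure_Ln n mu \<longleftrightarrow> (\<forall>v\<in>{1..n}. mu v > 0)"

definition symmetric_Ln :: "nat \<Rightarrow> (nat \<Rightarrow> real) \<Rightarrow> bool" where
  "symmetric_Ln n mu \<longleftrightarrow> (\<forall>j\<in>{1..n}. mu j = mu (n + 1 - j))"

definition ball_Ln :: "nat \<Rightarrow> nat \<Rightarrow> nat \<Rightarrow> nat set" where
  "ball_Ln n x r = {y \<in> {1..n}. \<bar>int x - int y\<bar> \<le> int r}"

definition meas_Ln :: "(nat \<Rightarrow> real) \<Rightarrow> nat set \<Rightarrow> real" where
  "meas_Ln mu A = (\<Sum>v\<in>A. mu v)"

definition C0_Ln :: "nat \<Rightarrow> (nat \<Rightarrow> real) \<Rightarrow> real" where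
  "C0_Ln n mu = Max ((\<lambda>x. meas_Ln mu (ball_Ln n x 1) / mu x) ` {1..n})"

end

theory Submission
  imports Defs
begin

lemma ratio_le:
  assumes "x \<in> {1..n}" shows "meas_Ln mu (ball_Ln n x 1) / mu x \<le> C0_Ln n mu"
  unfolding C0_Ln_def using assms by (intro Max_ge) auto

lemma ball_int:
  assumes "2 \<le> x" "x + 1 \<le> n" shows "ball_Ln n x 1 = {x-1, x, x+1}"
  using assms unfolding ball_Ln_def by auto

lemma ball_one:
  assumes "2 \<le> n" shows "ball_Ln n 1 1 = {1, 2}"
  using assms unfolding ball_Ln_def by auto

lemma local_ineq:
  fixes n :: nat and mu :: "nat \<Rightarrow> real"
  assumes "is_measure_Ln n mu" "C0_Ln n mu < 3" "1 \<le> k" "k + 1 \<le> n"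
  defines "b \<equiv> (\<lambda>m. if m = 0 then 0 else mu m)"
  shows "b (k-1) + b (k+1) < 2 * b k"
proof -
  have pos: "mu k > 0" using assms(1,3,4) unfolding is_measure_Ln_def by auto
  have le: "meas_Ln mu (ball_Ln n k 1) \<le> C0_Ln n mu * mu k"
    using ratio_le[of k n mu] assms(3,4) pos by (simp add: divide_le_eq)
  have "C0_Ln n mu * mu k < 3 * mu k" using assms(2) pos by simp
  with le have r: "meas_Ln mu (ball_Ln n k 1) < 3 * mu k" by linarith
  show ?thesis
  proof (cases "k = 1")
    case True
    then show ?thesis using r ball_one[of n] assms(4) unfolding b_def meas_Ln_def by (simp add: numeral_2_eq_2)
  next
    case False
    then have "2 \<le> k" using assms(3) by simp
    then have "meas_Ln mu (ball_Ln n k 1) = mu (k-1) + mu k + mu (k+1)"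
    proof -
      obtain m where m: "k = Suc m" using \<open>2 \<le> k\<close> by (cases k) auto
      have "sum mu {k-1,k,k+1} = mu (k-1) + mu k + mu (k+1)" using m by (simp add: algebra_simps)
      then show ?thesis using ball_int[of k n] assms(4) \<open>2 \<le> k\<close> unfolding meas_Ln_def by simp
    qed
    then show ?thesis using r False \<open>2 \<le> k\<close> unfolding b_def by simp
  qed
qed

theorem lemma3p4:
  fixes n :: nat and mu :: "nat \<Rightarrow> real"
  assumes "n \<ge> 1"
    and "is_measure_Ln n mu"
    and "symmetric_Ln n mu"
    and "C0_Ln n mu < 3"
  shows "\<forall>i j. 1 \<le> i \<and> i < j \<and> j \<le> nat \<lceil>real n / 2\<rceil> \<longrightarrow>
           mu i < mu j \<and> mu j < (real j / real i) * mu i"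
proof -
  define b where "b = (\<lambda>m. if m = 0 then 0 else mu m)"
  define D where "D = (\<lambda>m. b (Suc m) - b m)"
  define c where "c = nat \<lceil>real n / 2\<rceil>"
  have c2: "2 * c \<le> n + 1" unfolding c_def by linarith
  have cn: "c \<le> n" using c2 assms(1) by linarith
  have step: "D k < D (k - 1)" if "1 \<le> k" "k + 1 \<le> n" for k
    using local_ineq[OF assms(2) assms(4) that] that unfolding D_def b_def by simp
  have dec: "D q < D p" if "p < q" "q + 1 \<le> n" for p q
    using that
  proof (induction q)
    case 0 then show ?case by simp
  next
    case (Suc q)
    have s: "D (Suc q) < D q" using step[of "Suc q"] Suc.prems by simp
    show ?case
    proof (cases "p = q")
      case True then show ?thesis using s by simp
    next
      case False then show ?thesis using Suc s by simp
    qed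
  qed
  have symD: "D (n - k) = - D k" if "1 \<le> k" "k + 1 \<le> n" for k
  proof -
    have sy: "\<forall>j\<in>{1..n}. mu j = mu (n + 1 - j)" using assms(3) unfolding symmetric_Ln_def .
    have "k \<in> {1..n}" "k+1 \<in> {1..n}" using that by auto
    then have "mu k = mu (n + 1 - k)" "mu (k+1) = mu (n + 1 - (k+1))"
      using sy by (metis, metis)
    moreover have "n + 1 - k = Suc (n - k)" "n + 1 - (k+1) = n - k" using that by auto
    ultimately show ?thesis using that unfolding D_def b_def by simp
  qed
  have Dpos: "D k > 0" if "1 \<le> k" "k + 1 \<le> c" for k
  proof -
    have "D (n - k) < D k" using dec[of k "n - k"] that c2 by simp
    then show ?thesis using symD[of k] that cn by simp
  qed
  have bpos: "b k > 0" if "1 \<le> k" "k \<le> n" for k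
    using assms(2) that unfolding is_measure_Ln_def b_def by auto
  have incr: "b i < b j" if "1 \<le> i" "i < j" "j \<le> c" for i j
    using that
  proof (induction j)
    case 0 then show ?case by simp
  next
    case (Suc j)
    have "D j > 0" using Dpos[of j] Suc.prems by simp
    then have "b j < b (Suc j)" unfolding D_def by simp
    then show ?case using Suc by (cases "i = j") auto
  qed
  have tel: "b k = (\<Sum>m<k. D m)" for k
  proof -
    have "(\<Sum>m<k. D m) = b k - b 0" unfolding D_def by (rule sum_lessThan_telescope)
    then show ?thesis unfolding b_def by simp
  qed
  have ratio_step: "real (Suc k) * b k > real k * b (Suc k)" if "1 \<le> k" "k + 1 \<le> n" for k
  proof -
    have "(\<Sum>m<k. D k) < (\<Sum>m<k. D m)"
      using that by (intro sum_strict_mono) (auto intro: dec simp: lessThan_empty_iff)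
    then have "real k * D k < b k" using tel[of k] by simp
    then show ?thesis unfolding D_def by (simp add: algebra_simps)
  qed
  have ratio: "b j / real j < b i / real i" if "1 \<le> i" "i < j" "j \<le> n" for i j
    using that
  proof (induction j)
    case 0 then show ?case by simp
  next
    case (Suc j)
    have "real (Suc j) * b j > real j * b (Suc j)" using ratio_step[of j] Suc.prems by simp
    then have "b (Suc j) / real (Suc j) < b j / real j" using Suc.prems
      by (simp add: field_simps)
    then show ?case using Suc by (cases "i = j") auto
  qed
  show ?thesis
  proof (intro allI impI)
    fix i j assume h: "1 \<le> i \<and> i < j \<and> j \<le> nat \<lceil>real n / 2\<rceil>"
    then have h': "1 \<le> i" "i < j" "j \<le> c" unfolding c_def by auto
    have "b i < b j" using incr h' by blast
    moreover have "b j / real j < b i / real i" using ratio[of i j] h' cn by simp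
    ultimately show "mu i < mu j \<and> mu j < (real j / real i) * mu i"
      using h' unfolding b_def by (auto simp: field_simps)
  qed
qed

end
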